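(* Let $\mathcal{C}$ be an ordinary smooth absolutely irreducible projective curve of genus $g\ge1$ over $\mathbb{F}_q$ with absolutely simple Jacobian, and suppose that the Galois group of the splitting field of $P(T)$ over $\mathbb{Q}$ is the Weyl group $\mathcal{W}_g$ of $\mathrm{Sp}(2g)$, acting on the roots so that for each $i\in\{1,\ldots,g\}$ it contains an automorphism exchanging $\tau_i$ and $\overline{\tau_i}$ while fixing $\tau_j$ and $\overline{\tau_j}$ for all $j\neq i$. Then the Frobenius angles $\vartheta_1,\ldots,\vartheta_g$ are linearly independent modulo $1$; equivalently, there is no nonzero $(k_0,\ldots,k_g)\in\mathbb{Z}^{g+1}$ with $\prod_{i=1}^g\tau_i^{k_i}=q^{k_0}$.
   Context: Let $\mathcal{C}$ be a smooth projective curve of genus $g\ge1$ over the finite field $\mathbb{F}_q$ ($q$ a power of the prime $p$). The numerator of its zeta function is $P(T)=\prod_{j=1}^{2g}(1-\tau_j T)\in\mathbb{Z}[T]$, where the Frobenius eigenvalues $\tau_j$ satisfy $|\tau_j|=q^{1/2}$ and $\tau_{j+g}=\overline{\tau_j}$ for $j=1,\ldots,g$. Write $\tau_j = q^{1/2}e^{\pi i \vartheta_j}$ and $\tau_{j+g}=q^{1/2}e^{-\pi i\vartheta_j}$ with $\vartheta_j\in[0,1]$; these $\vartheta_j$ ($j=1,\ldots,g$) are the Frobenius angles. Fixing an embedding $\overline{\mathbb{Q}}\hookrightarrow\overline{\mathbb{Q}}_p$, the curve is ordinary if at least half of $\tau_1,\ldots,\tau_{2g}$ are $p$-adic units. Real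 numbers $\psi_1,\ldots,\psi_s$ are linearly independent modulo $1$ if $1,\psi_1,\ldots,\psi_s$ are linearly independent over $\mathbb{Z}$. The Weyl group $\mathcal{W}_g$ of $\mathrm{Sp}(2g)$ is the group of signed permutations of the $g$ pairs $\{\tau_i,\overline{\tau_i}\}$ (permuting the pairs and independently swapping elements within pairs). *)

theory Defs
  imports "HOL-Analysis.Analysis" "HOL-Computational_Algebra.Polynomial"
begin

text \<open>A place above the prime p on the algebraic numbers: a prime ideal of the ring of
  algebraic integers (inside the complex numbers) lying over p.  Fixing an embedding of the
  algebraic closure of Q into that of Q_p amounts to fixing such an ideal; an algebraic
  integer is a p-adic unit for the embedding iff it does not lie in the ideal.\<close>
definition prime_above :: "int \<Rightarrow> complex set \<Rightarrow> bool" where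
  "prime_above p PP \<longleftrightarrow>
     PP \<subseteq> {x. algebraic_int x} \<and> 0 \<in> PP \<and> 1 \<notin> PP \<and>
     (\<forall>x\<in>PP. \<forall>y\<in>PP. x + y \<in> PP) \<and>
     (\<forall>x\<in>PP. \<forall>a. algebraic_int a \<longrightarrow> a * x \<in> PP) \<and>
     (\<forall>a b. algebraic_int a \<longrightarrow> algebraic_int b \<longrightarrow> a * b \<in> PP \<longrightarrow> a \<in> PP \<or> b \<in> PP) \<and>
     (\<forall>n::int. of_int n \<in> PP \<longleftrightarrow> p dvd n)"

definition padic_unit :: "complex set \<Rightarrow> complex \<Rightarrow> bool" where
  "padic_unit PP x \<longleftrightarrow> algebraic_int x \<and> x \<notin> PP"

definition ordinary :: "complex set \<Rightarrow> nat \<Rightarrow> (nat \<Rightarrow> complex) \<Rightarrow> bool" where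
  "ordinary PP g tau \<longleftrightarrow> g \<le> card {j. j < 2*g \<and> padic_unit PP (tau j)}"

definition is_subfield_C :: "complex set \<Rightarrow> bool" where
  "is_subfield_C F \<longleftrightarrow> 0 \<in> F \<and> 1 \<in> F \<and>
     (\<forall>x\<in>F. \<forall>y\<in>F. x + y \<in> F \<and> x - y \<in> F \<and> x * y \<in> F) \<and> (\<forall>x\<in>F. inverse x \<in> F)"

definition gen_field :: "complex set \<Rightarrow> complex set" where
  "gen_field S = \<Inter>{F. is_subfield_C F \<and> S \<subseteq> F}"

text \<open>Field automorphisms of a subfield K of C (over Q automatically), normalised to be the
  identity outside K so that they are uniquely represented.\<close>
definition field_auts :: "complex set \<Rightarrow> (complex \<Rightarrow> complex) set" where
  "field_auts K = {\<sigma>. bij_betw \<sigma> K K \<and>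
      (\<forall>x\<in>K. \<forall>y\<in>K. \<sigma> (x + y) = \<sigma> x + \<sigma> y \<and> \<sigma> (x * y) = \<sigma> x * \<sigma> y) \<and>
      (\<forall>x. x \<notin> K \<longrightarrow> \<sigma> x = x)}"

definition partner :: "nat \<Rightarrow> nat \<Rightarrow> nat" where
  "partner g j = (if j < g then j + g else j - g)"

text \<open>Weyl group of Sp(2g): signed permutations of the pairs {j, j+g}, j < g, as permutations
  of the index set {0..<2g}.\<close>
definition weyl_Sp :: "nat \<Rightarrow> (nat \<Rightarrow> nat) set" where
  "weyl_Sp g = {\<pi>. bij_betw \<pi> {..<2*g} {..<2*g} \<and> (\<forall>j. 2*g \<le> j \<longrightarrow> \<pi> j = j) \<and>
      (\<forall>j<2*g. \<pi> (partner g j) = partner g (\<pi> j))}"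

end

theory Submission imports Defs begin

lemma gen_field_sub: "is_subfield_C (gen_field S)" "S \<subseteq> gen_field S"
proof -
  have "is_subfield_C UNIV" by (simp add: is_subfield_C_def)
  then show "is_subfield_C (gen_field S)" unfolding gen_field_def is_subfield_C_def by blast
  show "S \<subseteq> gen_field S" unfolding gen_field_def by blast
qed

locale autK =
  fixes K :: "complex set" and \<sigma> :: "complex \<Rightarrow> complex"
  assumes sub: "is_subfield_C K" and aut: "\<sigma> \<in> field_auts K"
begin

lemma K0: "0 \<in> K" and K1: "1 \<in> K" and Kadd: "x \<in> K \<Longrightarrow> y \<in> K \<Longrightarrow> x + y \<in> K"
  and Kmult: "x \<in> K \<Longrightarrow> y \<in> K \<Longrightarrow> x * y \<in> K" and Kinv: "x \<in> K \<Longrightarrow> inverse x \<in> K"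
  using sub by (auto simp: is_subfield_C_def)

lemma sadd: "x \<in> K \<Longrightarrow> y \<in> K \<Longrightarrow> \<sigma> (x + y) = \<sigma> x + \<sigma> y"
  and smult: "x \<in> K \<Longrightarrow> y \<in> K \<Longrightarrow> \<sigma> (x * y) = \<sigma> x * \<sigma> y"
  and sinj: "inj_on \<sigma> K"
  using aut by (auto simp: field_auts_def bij_betw_def)

lemma s0: "\<sigma> 0 = 0"
  using sadd[OF K0 K0] by simp

lemma s1: "\<sigma> 1 = 1"
proof -
  have "\<sigma> 1 = \<sigma> 1 * \<sigma> 1" using smult[OF K1 K1] by simp
  hence "\<sigma> 1 = 0 \<or> \<sigma> 1 = 1" by (metis mult_cancel_left1)
  moreover have "\<sigma> 1 \<noteq> 0" using sinj K0 K1 s0 by (metis inj_on_def zero_neq_one)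
  ultimately show ?thesis by blast
qed

lemma snat: "of_nat n \<in> K \<and> \<sigma> (of_nat n) = of_nat n"
proof (induction n)
  case 0 then show ?case using K0 s0 by simp
next
  case (Suc n)
  have "of_nat (Suc n) = (1::complex) + of_nat n" by simp
  then show ?case using Suc K1 Kadd sadd s1 by metis
qed

lemma sinv: "x \<in> K \<Longrightarrow> \<sigma> (inverse x) = inverse (\<sigma> x)"
proof (cases "x = 0")
  case True then show ?thesis using s0 by simp
next
  case False
  assume x: "x \<in> K"
  have "\<sigma> x * \<sigma> (inverse x) = 1" using smult[OF x Kinv[OF x]] False s1 by simp
  then show ?thesis by (metis inverse_unique)
qed

lemma spow: "x \<in> K \<Longrightarrow> x ^ n \<in> K \<and> \<sigma> (x ^ n) = \<sigma> x ^ n"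
  by (induction n) (auto simp: K1 s1 Kmult smult)

lemma spowi: "x \<in> K \<Longrightarrow> x powi n \<in> K \<and> \<sigma> (x powi n) = \<sigma> x powi n"
  by (auto simp: power_int_def spow Kinv sinv)

lemma sprod: "finite A \<Longrightarrow> (\<forall>a\<in>A. f a \<in> K) \<Longrightarrow> prod f A \<in> K \<and> \<sigma> (prod f A) = (\<Prod>a\<in>A. \<sigma> (f a))"
  by (induction A rule: finite_induct) (auto simp: K1 s1 Kmult smult)

end

lemma algint_root: assumes "n > 0" "y ^ n = (of_int c :: complex)" shows "algebraic_int y"
proof (rule algebraic_int.intros[of "[:- of_int c:] + monom 1 n"])
  show "lead_coeff ([:- of_int c:] + monom 1 n) = (1::complex)" using assms(1)
    by (subst lead_coeff_add_le) (auto simp: degree_monom_eq)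
  show "\<forall>i. coeff ([:- of_int c:] + monom 1 n) i \<in> \<int>"
    by (auto simp: coeff_monom coeff_pCons split: nat.splits)
  show "poly ([:- of_int c:] + monom 1 n) y = 0" using assms(2) by (simp add: poly_monom)
qed

lemma prod_powi_sum: "finite A \<Longrightarrow> (x::complex) \<noteq> 0 \<Longrightarrow> (\<Prod>a\<in>A. x powi f a) = x powi (sum f A)"
  by (induction A rule: finite_induct) (auto simp: power_int_add)

theorem mainTheorem6:
  fixes p :: int and e g :: nat and q :: real
    and tau :: "nat \<Rightarrow> complex" and theta :: "nat \<Rightarrow> real"
    and PP :: "complex set" and \<Phi> :: "(complex \<Rightarrow> complex) \<Rightarrow> nat \<Rightarrow> nat"
  assumes p_prime: "prime p" and e_pos: "e \<ge> 1" and q_def: "q = real_of_int (p ^ e)"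
    and g_pos: "g \<ge> 1"
    and P_int: "\<forall>n. coeff (\<Prod>j<2*g. [:1, - tau j:]) n \<in> \<int>"
    and theta_range: "\<forall>j<g. 0 \<le> theta j \<and> theta j \<le> 1"
    and tau_angle: "\<forall>j<g. tau j = complex_of_real (sqrt q) * exp (\<i> * complex_of_real (pi * theta j))"
    and tau_conj: "\<forall>j<g. tau (j + g) = complex_of_real (sqrt q) * exp (- \<i> * complex_of_real (pi * theta j))"
    and PP_place: "prime_above p PP"
    and ord: "ordinary PP g tau"
    and gal_weyl: "bij_betw \<Phi> (field_auts (gen_field (tau ` {..<2*g}))) (weyl_Sp g)"
    and gal_action: "\<forall>\<sigma>\<in>field_auts (gen_field (tau ` {..<2*g})). \<forall>j<2*g. \<sigma> (tau j) = tau (\<Phi> \<sigma> j)"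
    and gal_swaps: "\<forall>i<g. \<exists>\<sigma>\<in>field_auts (gen_field (tau ` {..<2*g})).
        \<sigma> (tau i) = tau (i + g) \<and> \<sigma> (tau (i + g)) = tau i \<and>
        (\<forall>j<g. j \<noteq> i \<longrightarrow> \<sigma> (tau j) = tau j \<and> \<sigma> (tau (j + g)) = tau (j + g))"
  shows "(\<forall>(k0::int) (k::nat \<Rightarrow> int).
            of_int k0 + (\<Sum>i<g. of_int (k i) * theta i) = 0 \<longrightarrow> k0 = 0 \<and> (\<forall>i<g. k i = 0))
       \<and> (\<forall>(k0::int) (k::nat \<Rightarrow> int).
            (\<Prod>i<g. tau i powi k i) = complex_of_real q powi k0 \<longrightarrow> k0 = 0 \<and> (\<forall>i<g. k i = 0))"
  proof -
  define K where "K = gen_field (tau ` {..<2*g})"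
  have Ksub: "is_subfield_C K" using gen_field_sub K_def by auto
  have tauK: "\<And>j. j < 2*g \<Longrightarrow> tau j \<in> K" using gen_field_sub(2)[of "tau ` {..<2*g}"] K_def by auto
  have p2: "p \<ge> 2" using p_prime by (simp add: prime_ge_2_int)
  have "p ^ e \<ge> p ^ 1" using p2 e_pos by (intro power_increasing) auto
  hence "p ^ e \<ge> 2" using p2 by simp
  hence "real_of_int (p ^ e) \<ge> 2" by linarith
  hence q1: "q > 1" using q_def by linarith
  have sq: "complex_of_real (sqrt q) * complex_of_real (sqrt q) = complex_of_real q"
    using q1 by (simp flip: of_real_mult)
  have tau_ne: "\<And>j. j < g \<Longrightarrow> tau j \<noteq> 0" using tau_angle q1 by simp
  have pair: "\<And>j. j < g \<Longrightarrow> tau j * tau (j+g) = complex_of_real q"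
  proof -
    fix j assume j: "j < g"
    have "tau j * tau (j+g) = (complex_of_real (sqrt q) * complex_of_real (sqrt q)) *
       (exp (\<i> * complex_of_real (pi * theta j)) * exp (- \<i> * complex_of_real (pi * theta j)))"
      using tau_angle tau_conj j by (simp only: mult_ac)
    also have "\<dots> = complex_of_real q" using sq by (simp flip: exp_add)
    finally show "tau j * tau (j+g) = complex_of_real q" .
  qed
  have qC: "\<And>m. complex_of_real q ^ m = of_int (p^(e*m))" by (simp add: q_def power_mult)
  have PPint: "\<And>n. of_int n \<in> PP \<longleftrightarrow> p dvd n" using PP_place unfolding prime_above_def by blast
  have PPprime: "\<And>a b. algebraic_int a \<Longrightarrow> algebraic_int b \<Longrightarrow> a*b \<in> PP \<Longrightarrow> a\<in>PP \<or> b\<in>PP"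
    using PP_place unfolding prime_above_def by blast
  have qPP: "\<And>m. m > 0 \<Longrightarrow> complex_of_real q ^ m \<in> PP"
  proof -
    fix m :: nat assume "m > 0"
    hence "e * m > 0" using e_pos by simp
    hence "p dvd p^(e*m)" by (simp add: dvd_power)
    hence "of_int (p^(e*m)) \<in> PP" using PPint by blast
    thus "complex_of_real q ^ m \<in> PP" using qC[of m] by simp
  qed
  have nounit_pair: "\<And>j. j<g \<Longrightarrow> \<not>(padic_unit PP (tau j) \<and> padic_unit PP (tau (j+g)))"
  proof
    fix j assume j: "j < g" and u: "padic_unit PP (tau j) \<and> padic_unit PP (tau (j+g))"
    have "tau j * tau (j+g) \<in> PP" using pair[OF j] qPP[of 1] by simp
    thus False using u PPprime unfolding padic_unit_def by blast
  qed
  have key: "\<And>x m. m > 0 \<Longrightarrow> x^(2*m) = complex_of_real q ^ m \<Longrightarrow> \<not> padic_unit PP x"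
  proof -
    fix x :: complex and m :: nat assume m: "m > 0" and xm: "x^(2*m) = complex_of_real q ^ m"
    have ai: "algebraic_int (x^j)" for j
    proof -
      have "(x^j)^(2*m) = (x^(2*m))^j" by (simp flip: power_mult add: mult.commute)
      also have "\<dots> = of_int (p^(e*(m*j)))" using xm qC by (simp flip: power_mult add: mult.assoc)
      finally show ?thesis using m by (intro algint_root[of "2*m"]) auto
    qed
    have ind: "x^(Suc j) \<in> PP \<Longrightarrow> x \<in> PP" for j
    proof (induction j)
      case 0 then show ?case by simp
    next
      case (Suc j)
      have "x * x^(Suc j) \<in> PP" using Suc.prems by simp
      then have "x \<in> PP \<or> x^(Suc j) \<in> PP" using PPprime ai[of 1] ai[of "Suc j"] by simp
      then show ?case using Suc.IH by blast
    qed
    have "x^(Suc (2*m - 1)) \<in> PP" using m xm qPP[OF m] by simp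
    hence "x \<in> PP" by (rule ind)
    thus "\<not> padic_unit PP x" by (simp add: padic_unit_def)
  qed
  have count: "\<And>i. i<g \<Longrightarrow> \<not> padic_unit PP (tau i) \<Longrightarrow> \<not> padic_unit PP (tau (i+g)) \<Longrightarrow> False"
  proof -
    fix i assume i: "i < g" and n1: "\<not> padic_unit PP (tau i)" and n2: "\<not> padic_unit PP (tau (i+g))"
    define U where "U = {j. j<2*g \<and> padic_unit PP (tau j)}"
    have gU: "g \<le> card U" using ord unfolding ordinary_def U_def .
    have dec: "\<And>j. j < 2*g \<Longrightarrow> j = j mod g \<or> j = j mod g + g"
    proof -
      fix j :: nat assume "j < 2*g"
      then show "j = j mod g \<or> j = j mod g + g"
        by (cases "j < g") (auto simp: le_mod_geq)
    qed
    have inj: "inj_on (\<lambda>j. j mod g) U"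
    proof (rule inj_onI)
      fix a b assume a: "a \<in> U" and b: "b \<in> U" and ab: "a mod g = b mod g"
      show "a = b"
      proof (rule ccontr)
        assume "a \<noteq> b"
        define r where "r = a mod g"
        have r: "r < g" using g_pos r_def by simp
        have eq: "{a,b} = {r, r+g}" using dec[of a] dec[of b] a b ab \<open>a \<noteq> b\<close> r_def U_def by auto
        have "r \<in> {a,b}" "r+g \<in> {a,b}" unfolding eq by auto
        hence "r \<in> U" "r+g \<in> U" using a b by auto
        hence "padic_unit PP (tau r) \<and> padic_unit PP (tau (r+g))" using U_def by auto
        thus False using nounit_pair[OF r] by blast
      qed
    qed
    have img: "(\<lambda>j. j mod g) ` U \<subseteq> {..<g} - {i}"
    proof
      fix y assume "y \<in> (\<lambda>j. j mod g) ` U"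
      then obtain j where j: "j \<in> U" "y = j mod g" by blast
      have "y < g" using g_pos j by simp
      moreover have "y \<noteq> i"
      proof
        assume "y = i"
        then have "j = i \<or> j = i + g" using dec[of j] j U_def by auto
        thus False using j n1 n2 U_def by auto
      qed
      ultimately show "y \<in> {..<g} - {i}" by simp
    qed
    have "card U = card ((\<lambda>j. j mod g) ` U)" using card_image[OF inj] by simp
    also have "\<dots> \<le> card ({..<g} - {i})" by (rule card_mono) (use img in auto)
    also have "\<dots> = g - 1" using i by simp
    finally show False using gU g_pos by simp
  qed
  have part2: "\<forall>(k0::int) (k::nat \<Rightarrow> int).
            (\<Prod>i<g. tau i powi k i) = complex_of_real q powi k0 \<longrightarrow> k0 = 0 \<and> (\<forall>i<g. k i = 0)"
  proof (intro allI impI)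
    fix k0 :: int and k :: "nat \<Rightarrow> int"
    assume H: "(\<Prod>i<g. tau i powi k i) = complex_of_real q powi k0"
    have kz: "\<forall>i<g. k i = 0"
    proof (intro allI impI, rule ccontr)
      fix i assume i: "i<g" and ki: "k i \<noteq> 0"
      obtain \<sigma> where \<sigma>: "\<sigma> \<in> field_auts K" "\<sigma> (tau i) = tau (i+g)"
        "\<forall>j<g. j \<noteq> i \<longrightarrow> \<sigma> (tau j) = tau j"
        using gal_swaps i K_def by blast
      interpret A: autK K \<sigma> using Ksub \<sigma>(1) by unfold_locales
      have "complex_of_real q = of_nat (nat (p^e))" using p2 by (simp add: q_def)
      hence qK: "complex_of_real q \<in> K \<and> \<sigma> (complex_of_real q) = complex_of_real q"
        using A.snat by simp
      define R where "R = (\<Prod>j\<in>{..<g}-{i}. tau j powi k j)"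
      have spl: "(\<Prod>j<g. tau j powi k j) = tau i powi k i * R"
        using prod.remove[of "{..<g}" i] i R_def by simp
      have "\<sigma> (\<Prod>j<g. tau j powi k j) = (\<Prod>j<g. \<sigma> (tau j powi k j))"
        using A.sprod[of "{..<g}" "\<lambda>j. tau j powi k j"] A.spowi tauK by simp
      also have "\<dots> = (\<Prod>j<g. \<sigma> (tau j) powi k j)"
        using A.spowi tauK by (intro prod.cong) auto
      also have "\<dots> = \<sigma> (tau i) powi k i * (\<Prod>j\<in>{..<g}-{i}. \<sigma> (tau j) powi k j)"
        using prod.remove[of "{..<g}" i] i by simp
      also have "\<dots> = tau (i+g) powi k i * R"
        unfolding R_def using \<sigma>(2,3) by (intro arg_cong2[where f="(*)"] prod.cong) auto
      finally have s1: "\<sigma> (\<Prod>j<g. tau j powi k j) = tau (i+g) powi k i * R" .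
      have "\<sigma> (complex_of_real q powi k0) = complex_of_real q powi k0"
        using A.spowi qK by simp
      hence E: "tau i powi k i * R = tau (i+g) powi k i * R" using H spl s1 by simp
      have "R \<noteq> 0" unfolding R_def using tau_ne by (auto simp: prod_zero_iff)
      hence Ea: "tau i powi k i = tau (i+g) powi k i" using E by simp
      define m where "m = nat \<bar>k i\<bar>"
      have m: "m > 0" using ki m_def by simp
      have tm: "tau i ^ m = tau (i+g) ^ m"
      proof (cases "k i > 0")
        case True then show ?thesis using Ea m_def by (simp add: power_int_def)
      next
        case False
        hence "inverse (tau i) ^ m = inverse (tau (i+g)) ^ m" using Ea m_def ki by (simp add: power_int_def)
        thus ?thesis by (simp add: power_inverse)
      qed
      have pm: "(tau i * tau (i+g))^m = complex_of_real q ^ m" using pair[OF i] by simp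
      have "tau i ^ (2*m) = complex_of_real q ^ m"
        using tm pm by (simp add: mult_2 power_add power_mult_distrib)
      moreover have "tau (i+g) ^ (2*m) = complex_of_real q ^ m"
        using tm pm by (simp add: mult_2 power_add power_mult_distrib)
      ultimately show False using key[OF m] count[OF i] by blast
    qed
    hence "(\<Prod>i<g. tau i powi k i) = 1" by simp
    hence "complex_of_real (q powi k0) = 1" using H by (simp add: of_real_power_int)
    hence qk: "q powi k0 = 1" by (metis of_real_eq_1_iff)
    have "k0 = 0"
    proof (rule ccontr)
      assume "k0 \<noteq> 0"
      then consider "0 < k0" | "k0 < 0" by linarith
      then show False
      proof cases
        case 1 then show False using power_int_strict_increasing[OF 1 q1] qk by simp
      next
        case 2 then show False using power_int_strict_increasing[OF 2 q1] qk by simp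
      qed
    qed
    thus "k0 = 0 \<and> (\<forall>i<g. k i = 0)" using kz by simp
  qed
  have part1: "\<forall>(k0::int) (k::nat \<Rightarrow> int).
            of_int k0 + (\<Sum>i<g. of_int (k i) * theta i) = 0 \<longrightarrow> k0 = 0 \<and> (\<forall>i<g. k i = 0)"
  proof (intro allI impI)
    fix k0 :: int and k :: "nat \<Rightarrow> int"
    assume H: "real_of_int k0 + (\<Sum>i<g. real_of_int (k i) * theta i) = 0"
    have qnz: "complex_of_real q \<noteq> 0" using q1 by simp
    have each: "tau i powi (2 * k i) = complex_of_real q powi k i * exp (complex_of_real (2 * pi * (of_int (k i) * theta i)) * \<i>)"
      if i: "i < g" for i
    proof -
      have "tau i powi (2 * k i) = (complex_of_real (sqrt q) powi 2) powi k i * exp (of_int (2 * k i) * (\<i> * complex_of_real (pi * theta i)))"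
      proof -
        have "tau i powi (2 * k i) = complex_of_real (sqrt q) powi (2 * k i) * exp (\<i> * complex_of_real (pi * theta i)) powi (2 * k i)"
          using tau_angle i by (simp only: power_int_mult_distrib)
        also have "complex_of_real (sqrt q) powi (2 * k i) = (complex_of_real (sqrt q) powi 2) powi k i"
          by (rule power_int_mult)
        also have "exp (\<i> * complex_of_real (pi * theta i)) powi (2 * k i) = exp (of_int (2 * k i) * (\<i> * complex_of_real (pi * theta i)))"
          by (rule exp_power_int)
        finally show ?thesis .
      qed
      also have "complex_of_real (sqrt q) powi 2 = complex_of_real q" using sq by (simp add: power2_eq_square)
      finally show ?thesis by (simp add: algebra_simps)
    qed
    have "(\<Prod>i<g. tau i powi (2 * k i)) = (\<Prod>i<g. complex_of_real q powi k i) *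
        (\<Prod>i<g. exp (complex_of_real (2 * pi * (of_int (k i) * theta i)) * \<i>))"
      using each by (simp add: prod.distrib)
    also have "(\<Prod>i<g. complex_of_real q powi k i) = complex_of_real q powi (\<Sum>i<g. k i)"
      using prod_powi_sum[OF _ qnz, of "{..<g}" k] by simp
    also have "(\<Prod>i<g. exp (complex_of_real (2 * pi * (of_int (k i) * theta i)) * \<i>)) =
        exp (complex_of_real (2 * pi * (\<Sum>i<g. of_int (k i) * theta i)) * \<i>)"
      by (subst exp_sum[symmetric]) (simp_all add: sum_distrib_left sum_distrib_right)
    also have "(\<Sum>i<g. of_int (k i) * theta i) = - real_of_int k0" using H by simp
    also have "exp (complex_of_real (2 * pi * (- real_of_int k0)) * \<i>) = exp (2 * of_real pi * \<i>) powi (- k0)"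
    proof -
      have "exp (complex_of_real (2 * pi * (- real_of_int k0)) * \<i>) = exp (of_int (- k0) * (2 * of_real pi * \<i>))"
        by (intro arg_cong[where f=exp]) (simp add: algebra_simps)
      also have "\<dots> = exp (2 * of_real pi * \<i>) powi (- k0)" by (rule exp_power_int[symmetric])
      finally show ?thesis .
    qed
    finally have "(\<Prod>i<g. tau i powi (2 * k i)) = complex_of_real q powi (\<Sum>i<g. k i)" by simp
    hence "\<forall>i<g. 2 * k i = 0" using part2[rule_format, of "\<lambda>i. 2 * k i" "sum k {..<g}"] by blast
    hence kz: "\<forall>i<g. k i = 0" by simp
    hence "k0 = 0" using H by simp
    thus "k0 = 0 \<and> (\<forall>i<g. k i = 0)" using kz by simp
  qed
  show ?thesis using part1 part2 by blast
qed

end
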